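(* Let $1\le p<\infty$ and let $f\in BV_p[0,1]$ take values in $[0,1]$. For every $\varepsilon>0$ there exists $\eta>0$ such that whenever $0\le x_1<x_2<\dots<x_m\le1$ and $f(x_j)<\eta$ for all $j=1,\dots,m$, one has $\left(\sum_{j=1}^{m-1}|f(x_{j+1})-f(x_j)|^p\right)^{1/p}<\varepsilon$.
   Context: For $1\le p<\infty$, $BV_p[0,1]$ is the set of functions $f:[0,1]\to\mathbb F$ ($\mathbb F\in\{\mathbb R,\mathbb C\}$) with finite total Wiener $p$-variation $\operatorname{Var}_p(f,[0,1]):=\sup\sum_{j=1}^m|f(t_j)-f(t_{j-1})|^p$, the supremum over all partitions $0=t_0<t_1<\dots<t_m=1$. *)

theory Defs
  imports "HOL-Analysis.Analysis"
begin

definition partition01 :: "(nat \<Rightarrow> real) \<Rightarrow> nat \<Rightarrow> bool" where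
  "partition01 t m \<longleftrightarrow> t 0 = 0 \<and> t m = 1 \<and> (\<forall>j<m. t j < t (Suc j))"

definition pvar_sums :: "real \<Rightarrow> (real \<Rightarrow> 'a::real_normed_vector) \<Rightarrow> real set" where
  "pvar_sums p f = {(\<Sum>j\<in>{1..m}. norm (f (t j) - f (t (j - 1))) powr p) | t m. partition01 t m}"

definition Var_p :: "real \<Rightarrow> (real \<Rightarrow> 'a::real_normed_vector) \<Rightarrow> real" where
  "Var_p p f = Sup (pvar_sums p f)"

definition BV_p :: "real \<Rightarrow> (real \<Rightarrow> 'a::real_normed_vector) \<Rightarrow> bool" where
  "BV_p p f \<longleftrightarrow> bdd_above (pvar_sums p f)"

end

theory Submission
  imports Defs
begin

fun Lv :: "(real \<Rightarrow> real) \<Rightarrow> real \<Rightarrow> real list \<Rightarrow> real" where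
  "Lv f p (a # b # xs) = \<bar>f b - f a\<bar> powr p + Lv f p (b # xs)"
| "Lv f p _ = 0"

lemma Lv_nonneg: "Lv f p xs \<ge> 0"
  by (induction f p xs rule: Lv.induct) auto

lemma Lv_append: "Lv f p (xs @ ys) = Lv f p xs + Lv f p ys +
   (if xs \<noteq> [] \<and> ys \<noteq> [] then \<bar>f (hd ys) - f (last xs)\<bar> powr p else 0)"
proof (induction xs rule: induct_list012)
  case 1 then show ?case by simp
next
  case (2 x) then show ?case by (cases ys) auto
next
  case (3 x y zs) then show ?case by auto
qed

lemma Lv_nth: "Lv f p xs = (\<Sum>j<length xs - 1. \<bar>f (xs!Suc j) - f (xs!j)\<bar> powr p)"
proof (induction xs rule: induct_list012)
  case 1 then show ?case by simp
next
  case (2 x) then show ?case by simp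
next
  case (3 x y zs) 
  have "(\<Sum>j<length (x#y#zs) - 1. \<bar>f ((x#y#zs)!Suc j) - f ((x#y#zs)!j)\<bar> powr p)
      = (\<Sum>j<Suc (length (y#zs) - 1). \<bar>f ((x#y#zs)!Suc j) - f ((x#y#zs)!j)\<bar> powr p)" by simp
  also have "\<dots> = \<bar>f y - f x\<bar> powr p + (\<Sum>j<length (y#zs) - 1. \<bar>f ((y#zs)!Suc j) - f ((y#zs)!j)\<bar> powr p)"
    by (subst sum.lessThan_Suc_shift) simp
  finally show ?case using 3 by simp
qed


lemma tangent:
  fixes w y eta p :: real
  assumes "1 \<le> p" "0 \<le> w" "w \<le> 1" "0 \<le> y" "y < eta"
  shows "w powr p - p * eta \<le> \<bar>w - y\<bar> powr p"
proof (cases "w \<le> eta")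
  case True
  have "w powr p \<le> w"
  proof (cases "w = 0")
    case False then show ?thesis using powr_le_one_le[of w p] assms by auto
  qed simp
  moreover have "eta \<le> p * eta" using assms by simp
  moreover have "0 \<le> \<bar>w - y\<bar> powr p" by simp
  ultimately show ?thesis using True by linarith
next
  case False
  have pos: "w - eta > 0" using False by simp
  have w0: "w > 0" using pos assms(4,5) by linarith
  have d: "((\<lambda>x. x powr p) has_field_derivative p * w powr (p - 1)) (at w within {0<..})"
    by (rule has_field_derivative_at_within[OF has_real_derivative_powr[OF w0]])
  have A: "p * w powr (p - 1) * ((w - eta) - w) \<le> (w - eta) powr p - w powr p"
    apply (rule convex_on_imp_above_tangent[OF powr_convex[OF assms(1)] _ _ _ d])
    using pos assms(4,5) by (auto simp: interior_open)
  have e1: "(w - eta) - w = - eta" by simp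
  have B: "p * w powr (p - 1) * ((w - eta) - w) = - (p * w powr (p - 1) * eta)"
    by (simp only: e1 mult_minus_right)
  have w1: "w powr (p - 1) \<le> 1" using assms by (intro powr_le1) auto
  have C: "p * w powr (p - 1) * eta \<le> p * eta"
  proof -
    have "p * w powr (p - 1) \<le> p * 1" using w1 assms(1) by (intro mult_left_mono) auto
    then show ?thesis using assms(4,5) by (intro mult_right_mono) auto
  qed
  have "w powr p - p * eta \<le> (w - eta) powr p" using A B C by linarith
  also have "\<dots> \<le> \<bar>w - y\<bar> powr p" using pos assms by (intro powr_mono2) auto
  finally show ?thesis .
qed

lemma two_terms:
  fixes u v y z eta p :: real
  assumes "1 \<le> p" "0 \<le> u" "u \<le> 1" "0 \<le> v" "v \<le> 1" "0 \<le> y" "y < eta" "0 \<le> z" "z < eta"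
  shows "\<bar>v - u\<bar> powr p \<le> \<bar>y - u\<bar> powr p + \<bar>v - z\<bar> powr p + p * eta"
proof (cases "v \<le> u")
  case True
  have "\<bar>v - u\<bar> powr p \<le> u powr p" using True assms by (intro powr_mono2) auto
  also have "\<dots> \<le> \<bar>u - y\<bar> powr p + p * eta" using tangent[of p u y eta] assms by linarith
  also have "\<bar>u - y\<bar> = \<bar>y - u\<bar>" by simp
  finally show ?thesis using powr_ge_zero[of "\<bar>v - z\<bar>" p] by linarith
next
  case False
  have "\<bar>v - u\<bar> powr p \<le> v powr p" using False assms by (intro powr_mono2) auto
  also have "\<dots> \<le> \<bar>v - z\<bar> powr p + p * eta" using tangent[of p v z eta] assms by linarith
  finally show ?thesis using powr_ge_zero[of "\<bar>y - u\<bar>" p] by linarith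
qed

lemma small_term:
  fixes a b eta p :: real
  assumes "1 \<le> p" "0 \<le> a" "a < eta" "0 \<le> b" "b < eta" "eta \<le> 1"
  shows "\<bar>a - b\<bar> powr p \<le> eta"
proof (cases "a = b")
  case True then show ?thesis using assms by simp
next
  case False
  then have "\<bar>a - b\<bar> powr p \<le> \<bar>a - b\<bar>" using assms by (intro powr_le_one_le) auto
  also have "\<dots> \<le> eta" using assms by auto
  finally show ?thesis .
qed

lemma gap:
  assumes "1 \<le> p" "0 \<le> f a" "f a \<le> 1" "0 \<le> f b" "f b \<le> 1" "0 < eta"
    and cs: "\<forall>c\<in>set cs. 0 \<le> f c \<and> f c < eta"
  shows "\<bar>f b - f a\<bar> powr p + Lv f p cs - p * eta \<le> Lv f p (a # cs @ [b])"
proof (cases cs)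
  case Nil
  then show ?thesis using assms cs by simp
next
  case (Cons c cs')
  have e: "a # cs @ [b] = [a] @ (cs @ [b])" by simp
  have "Lv f p (a # cs @ [b]) = Lv f p cs + \<bar>f b - f (last cs)\<bar> powr p + \<bar>f (hd cs) - f a\<bar> powr p"
    unfolding e Lv_append[of f p "[a]"] Lv_append[of f p cs] using Cons by simp
  moreover have "last cs \<in> set cs" "hd cs \<in> set cs" using Cons by auto
  ultimately show ?thesis using two_terms[of p "f a" "f b" "f (hd cs)" eta "f (last cs)"] assms cs
    by auto
qed

lemma sorted_hd_le:
  fixes xs :: "real list"
  assumes "sorted_wrt (<) xs" "x \<in> set xs"
  shows "hd xs \<le> x"
  using assms by (cases xs) auto

lemma Lv_const:
  fixes xs :: "real list"
  shows "sorted_wrt (<) xs \<Longrightarrow> set xs \<subseteq> {c..c} \<Longrightarrow> Lv f p xs = 0"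
  by (induction f p xs rule: Lv.induct) auto

lemma core:
  fixes f :: "real \<Rightarrow> real" and p eta :: real and P C :: "real list"
  assumes p: "1 \<le> p" and eta: "0 < eta" "eta \<le> 1"
  shows "sorted_wrt (<) P \<Longrightarrow> P \<noteq> [] \<Longrightarrow> (\<forall>t\<in>set P. 0 \<le> f t \<and> f t \<le> 1)
    \<Longrightarrow> sorted_wrt (<) C \<Longrightarrow> set C \<subseteq> {hd P..last P} \<Longrightarrow> (\<forall>c\<in>set C. 0 \<le> f c \<and> f c < eta)
    \<Longrightarrow> \<exists>Q. sorted_wrt (<) Q \<and> Q \<noteq> [] \<and> hd Q = hd P \<and> last Q = last P \<and> set Q \<subseteq> set P \<union> set C
        \<and> Lv f p P + Lv f p C - (p + 2) * eta * length P \<le> Lv f p Q"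
proof (induction P arbitrary: C)
  case Nil
  then show ?case by simp
next
  case (Cons t0 P')
  note IH = Cons.IH and prems = Cons.prems
  show ?case
  proof (cases P')
    case Nil
    have "Lv f p C = 0"
      using Lv_const[OF prems(4)] prems(5) Nil by simp
    then show ?thesis using Nil eta p
      by (intro exI[of _ "[t0]"]) (auto simp: Lv_nonneg)
  next
    case (Cons t1 P'')
    note P' = Cons
    define C1 where "C1 = takeWhile (\<lambda>x. x < t1) C"
    define C2 where "C2 = dropWhile (\<lambda>x. x < t1) C"
    have CC: "C = C1 @ C2" unfolding C1_def C2_def by simp
    have sC: "sorted_wrt (<) C1" "sorted_wrt (<) C2" "\<forall>x\<in>set C1. \<forall>y\<in>set C2. x < y"
      using prems(4) unfolding CC sorted_wrt_append by auto
    have t01: "t0 < t1" using prems(1) P' by simp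
    have sP: "\<forall>x\<in>set P''. t1 < x" using prems(1) P' by simp
    have lastP: "last (t0 # P') = last (t1 # P'')" using P' by simp
    have C1set: "\<forall>x\<in>set C1. t0 \<le> x \<and> x < t1"
      using prems(5) unfolding C1_def by (auto dest: set_takeWhileD)
    have C2ge: "\<forall>x\<in>set C2. t1 \<le> x"
    proof (cases C2)
      case (Cons d rest)
      then have "C = C1 @ d # rest" "\<not> d < t1" unfolding C2_def C1_def
        using dropWhile_eq_Cons_conv by metis+
      moreover have "\<forall>x\<in>set rest. d < x" using sC(2) Cons by simp
      ultimately show ?thesis using Cons by force
    qed simp
    have C2set: "set C2 \<subseteq> {hd (t1 # P'')..last (t1 # P'')}"
    proof
      fix x assume x: "x \<in> set C2"
      have "x \<in> set C" using CC x by simp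
      then have "x \<le> last (t0 # P')" using prems(5) by auto
      then show "x \<in> {hd (t1 # P'')..last (t1 # P'')}" using C2ge x lastP by simp
    qed
    have fC: "\<forall>c\<in>set C1. 0 \<le> f c \<and> f c < eta" "\<forall>c\<in>set C2. 0 \<le> f c \<and> f c < eta"
      using prems(6) CC by auto
    obtain Q2 where Q2: "sorted_wrt (<) Q2" "Q2 \<noteq> []" "hd Q2 = t1" "last Q2 = last (t1 # P'')"
      "set Q2 \<subseteq> set (t1 # P'') \<union> set C2"
      "Lv f p (t1 # P'') + Lv f p C2 - (p + 2) * eta * length (t1 # P'') \<le> Lv f p Q2"
      using IH[of C2] prems(1,3) P' sC(2) C2set fC(2) by auto
    have Q2ge: "\<forall>y\<in>set Q2. t1 \<le> y" using Q2(5) sP C2ge by fastforce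
    define C1' where "C1' = (if C1 \<noteq> [] \<and> hd C1 = t0 then tl C1 else C1)"
    have C1'sub: "set C1' \<subseteq> set C1" unfolding C1'_def by (auto simp: list.set_sel(2))
    have sC1': "sorted_wrt (<) C1'" unfolding C1'_def using sC(1)
      by (cases C1) auto
    have t0nin: "t0 \<notin> set C1'"
    proof
      assume a: "t0 \<in> set C1'"
      show False
      proof (cases "C1 \<noteq> [] \<and> hd C1 = t0")
        case True
        then obtain r where "C1 = t0 # r" by (cases C1) auto
        then show False using a True sC(1) unfolding C1'_def by auto
      next
        case False
        then have "t0 \<in> set C1" "C1 \<noteq> []" using a unfolding C1'_def by auto
        then have "hd C1 \<le> t0" "t0 \<le> hd C1" using sorted_hd_le[OF sC(1)] C1set by auto
        then show False using False \<open>C1 \<noteq> []\<close> by simp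
      qed
    qed
    have C1'set: "\<forall>x\<in>set C1'. t0 < x \<and> x < t1" using C1'sub C1set t0nin
      by (metis less_eq_real_def subsetD)
    have LC1: "Lv f p C1 \<le> Lv f p C1' + eta"
    proof (cases "C1 \<noteq> [] \<and> hd C1 = t0")
      case True
      then obtain r where r: "C1 = t0 # r" by (cases C1) auto
      then have r': "C1' = r" unfolding C1'_def by simp
      have "Lv f p C1 = Lv f p r + (if r \<noteq> [] then \<bar>f (hd r) - f t0\<bar> powr p else 0)"
        using Lv_append[of f p "[t0]" r] r by simp
      moreover have "r \<noteq> [] \<Longrightarrow> \<bar>f (hd r) - f t0\<bar> powr p \<le> eta"
        using fC(1) r p eta by (intro small_term) auto
      ultimately show ?thesis using r' eta by auto
    next
      case False
      then have "C1' = C1" unfolding C1'_def by auto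
      then show ?thesis using eta by simp
    qed
    have LC: "Lv f p C \<le> Lv f p C1 + Lv f p C2 + eta"
    proof -
      have "C1 \<noteq> [] \<and> C2 \<noteq> [] \<Longrightarrow> \<bar>f (hd C2) - f (last C1)\<bar> powr p \<le> eta"
        using fC p eta by (intro small_term) auto
      then show ?thesis unfolding CC Lv_append using eta by auto
    qed
    have fP: "0 \<le> f t0" "f t0 \<le> 1" "0 \<le> f t1" "f t1 \<le> 1" using prems(3) P' by auto
    have G: "\<bar>f t1 - f t0\<bar> powr p + Lv f p C1' - p * eta \<le> Lv f p (t0 # C1' @ [t1])"
      using gap[of p f t0 t1 eta C1'] p fP fC(1) C1'sub eta by auto
    define Q where "Q = t0 # C1' @ Q2"
    have Q2e: "Q2 = t1 # tl Q2" using Q2(2,3) by (cases Q2) auto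
    have LQ: "Lv f p Q = Lv f p (t0 # C1' @ [t1]) + Lv f p Q2"
    proof -
      have a: "Lv f p Q = Lv f p (t0 # C1') + Lv f p Q2 + \<bar>f t1 - f (last (t0 # C1'))\<bar> powr p"
        unfolding Q_def using Lv_append[of f p "t0 # C1'" Q2] Q2(2,3) by simp
      have b: "Lv f p (t0 # C1' @ [t1]) = Lv f p (t0 # C1') + \<bar>f t1 - f (last (t0 # C1'))\<bar> powr p"
        using Lv_append[of f p "t0 # C1'" "[t1]"] by simp
      show ?thesis using a b by simp
    qed
    have LP: "Lv f p (t0 # P') = \<bar>f t1 - f t0\<bar> powr p + Lv f p (t1 # P'')" using P' by simp
    have len: "real (length (t0 # P')) = real (length (t1 # P'')) + 1" using P' by simp
    have sQ: "sorted_wrt (<) Q"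
      unfolding Q_def using sC1' Q2(1) C1'set Q2ge t01
      by (auto simp: sorted_wrt_append) (meson less_le_trans)+
    have "Lv f p (t0 # P') + Lv f p C - (p + 2) * eta * length (t0 # P') \<le> Lv f p Q"
      using LQ G LP len LC LC1 Q2(6) by (simp add: algebra_simps)
    moreover have "set Q \<subseteq> set (t0 # P') \<union> set C"
      using Q2(5) C1'sub P' CC unfolding Q_def by auto
    moreover have "last Q = last (t0 # P')" using Q2(2,4) lastP unfolding Q_def by simp
    moreover have "Q \<noteq> []" "hd Q = t0" unfolding Q_def by simp_all
    ultimately show ?thesis using sQ by (intro exI[of _ Q]) auto
  qed
qed


lemma shift_sum: "(\<Sum>j\<in>{1..n}. g j) = (\<Sum>j<n. (g (Suc j) :: real))"
  by (induction n) (auto simp: atLeastAtMostSuc_conv)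

lemma shift_sum2: "(\<Sum>j\<in>{1..<n}. g j) = (\<Sum>j<n - 1. (g (Suc j) :: real))"
proof (cases n)
  case 0 then show ?thesis by simp
next
  case (Suc k)
  have "{1..<Suc k} = {1..k}" by auto
  then show ?thesis using Suc shift_sum[of g k] by simp
qed

lemma chain_lt:
  fixes x :: "nat \<Rightarrow> real"
  assumes "\<forall>j. a \<le> j \<longrightarrow> Suc j < b \<longrightarrow> x j < x (Suc j)"
  shows "a \<le> i \<Longrightarrow> i < k \<Longrightarrow> k < b \<Longrightarrow> x i < x k"
proof (induction k)
  case 0 then show ?case by simp
next
  case (Suc k)
  show ?case
  proof (cases "i = k")
    case True then show ?thesis using assms Suc.prems by auto
  next
    case False
    then have "x i < x k" using Suc by auto
    also have "x k < x (Suc k)" using assms Suc.prems by auto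
    finally show ?thesis .
  qed
qed

lemma sorted_map:
  fixes x :: "nat \<Rightarrow> real"
  assumes "\<forall>j. a \<le> j \<longrightarrow> Suc j < b \<longrightarrow> x j < x (Suc j)"
  shows "sorted_wrt (<) (map x [a..<b])"
  unfolding sorted_wrt_iff_nth_less by (auto intro!: chain_lt[OF assms])

lemma sorted_last_ge:
  fixes xs :: "real list"
  shows "sorted_wrt (<) xs \<Longrightarrow> y \<in> set xs \<Longrightarrow> y \<le> last xs"
proof (induction xs)
  case (Cons a xs)
  then show ?case
    by (cases "xs = []") (auto, meson last_in_set less_eq_real_def)
qed simp

lemma Lv_le_Var:
  fixes f :: "real \<Rightarrow> real"
  assumes BV: "bdd_above (pvar_sums p f)" and Q: "sorted_wrt (<) Q" "Q \<noteq> []" "hd Q = 0" "last Q = 1"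
  shows "Lv f p Q \<le> Var_p p f"
proof -
  let ?m = "length Q - 1"
  have part: "partition01 (\<lambda>j. Q ! j) ?m" unfolding partition01_def using Q
    by (auto simp: hd_conv_nth last_conv_nth sorted_wrt_iff_nth_less)
  have "Lv f p Q = (\<Sum>j\<in>{1..?m}. norm (f (Q ! j) - f (Q ! (j - 1))) powr p)"
    unfolding Lv_nth shift_sum by simp
  then have "Lv f p Q \<in> pvar_sums p f" unfolding pvar_sums_def using part by blast
  then show ?thesis unfolding Var_p_def using BV by (rule cSup_upper)
qed

theorem lemma3p4:
  fixes p :: real and f :: "real \<Rightarrow> real"
  assumes "1 \<le> p"
    and "BV_p p f"
    and "\<forall>x\<in>{0..1}. f x \<in> {0..1}"
  shows "\<forall>\<epsilon>>0. \<exists>\<eta>>0. \<forall>(x :: nat \<Rightarrow> real) (m :: nat).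
           (\<forall>j\<in>{1..m}. 0 \<le> x j \<and> x j \<le> 1) \<and> (\<forall>j\<in>{1..<m}. x j < x (Suc j))
           \<and> (\<forall>j\<in>{1..m}. f (x j) < \<eta>)
           \<longrightarrow> (\<Sum>j\<in>{1..<m}. \<bar>f (x (Suc j)) - f (x j)\<bar> powr p) powr (1 / p) < \<epsilon>"
proof (intro allI impI)
  fix \<epsilon> :: real assume \<epsilon>: "\<epsilon> > 0"
  have p: "1 \<le> p" by (rule assms(1))
  have BV: "bdd_above (pvar_sums p f)" using assms(2) unfolding BV_p_def .
  define \<delta> where "\<delta> = \<epsilon> powr p / 2"
  have \<epsilon>p: "\<epsilon> powr p > 0" using \<epsilon> by simp
  have \<delta>: "\<delta> > 0" unfolding \<delta>_def using \<epsilon> by simp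
  have part1: "partition01 (\<lambda>j. if j = 0 then 0 else 1) 1" unfolding partition01_def by simp
  have ne: "pvar_sums p f \<noteq> {}" unfolding pvar_sums_def using part1 by blast
  obtain s where s: "s \<in> pvar_sums p f" "Var_p p f - \<delta> < s"
    using less_cSupD[OF ne, of "Var_p p f - \<delta>"] \<delta> unfolding Var_p_def by auto
  then obtain t M where part: "partition01 t M"
    and sdef: "s = (\<Sum>j\<in>{1..M}. norm (f (t j) - f (t (j - 1))) powr p)"
    unfolding pvar_sums_def by blast
  have M1: "M \<ge> 1" using part unfolding partition01_def by (cases M) auto
  define P where "P = map t [0..<Suc M]"
  have sP: "sorted_wrt (<) P" unfolding P_def
    using part unfolding partition01_def by (intro sorted_map) auto
  have Pne: "P \<noteq> []" unfolding P_def by simp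
  have hdP: "hd P = 0" using part unfolding P_def partition01_def by (simp add: hd_map del: upt_Suc)
  have lastP: "last P = 1" using part unfolding P_def partition01_def by (simp add: last_map del: upt_Suc)
  have lenP: "length P = Suc M" unfolding P_def by simp
  have LP: "Lv f p P = s"
    unfolding Lv_nth sdef shift_sum lenP by (simp add: P_def nth_map_upt del: upt_Suc)
  have fP: "\<forall>u\<in>set P. 0 \<le> f u \<and> f u \<le> 1"
  proof
    fix u assume u: "u \<in> set P"
    have "hd P \<le> u" "u \<le> last P" using sorted_hd_le[OF sP u] sorted_last_ge[OF sP u] by auto
    then show "0 \<le> f u \<and> f u \<le> 1" using assms(3) hdP lastP by auto
  qed
  define K where "K = p + 2"
  have K: "K > 0" unfolding K_def using p by simp
  define N where "N = K * (real M + 1)"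
  have N: "N > 0" unfolding N_def using K by simp
  define \<eta> where "\<eta> = min 1 (\<epsilon> powr p / (4 * N))"
  have \<eta>: "\<eta> > 0" "\<eta> \<le> 1" unfolding \<eta>_def using \<epsilon> N by auto
  have Keta: "K * \<eta> * (M + 1) \<le> \<epsilon> powr p / 4"
  proof -
    have "\<eta> \<le> \<epsilon> powr p / (4 * N)" unfolding \<eta>_def by simp
    then have "N * \<eta> \<le> N * (\<epsilon> powr p / (4 * N))"
      using N by (intro mult_left_mono) auto
    also have "\<dots> = \<epsilon> powr p / 4" using N by simp
    finally show ?thesis unfolding N_def by (simp add: algebra_simps)
  qed
  show "\<exists>\<eta>>0. \<forall>(x :: nat \<Rightarrow> real) (m :: nat).
           (\<forall>j\<in>{1..m}. 0 \<le> x j \<and> x j \<le> 1) \<and> (\<forall>j\<in>{1..<m}. x j < x (Suc j))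
           \<and> (\<forall>j\<in>{1..m}. f (x j) < \<eta>)
           \<longrightarrow> (\<Sum>j\<in>{1..<m}. \<bar>f (x (Suc j)) - f (x j)\<bar> powr p) powr (1 / p) < \<epsilon>"
  proof (intro exI[of _ \<eta>] conjI allI impI)
    show "\<eta> > 0" by (rule \<eta>(1))
    fix x :: "nat \<Rightarrow> real" and m :: nat
    assume H: "(\<forall>j\<in>{1..m}. 0 \<le> x j \<and> x j \<le> 1) \<and> (\<forall>j\<in>{1..<m}. x j < x (Suc j))
           \<and> (\<forall>j\<in>{1..m}. f (x j) < \<eta>)"
    define C where "C = map x [1..<Suc m]"
    have sC: "sorted_wrt (<) C" unfolding C_def using H by (intro sorted_map) auto
    have setC: "set C \<subseteq> {hd P..last P}" unfolding C_def hdP lastP using H by auto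
    have fC: "\<forall>c\<in>set C. 0 \<le> f c \<and> f c < \<eta>" unfolding C_def using H assms(3) by auto
    obtain Q where Q: "sorted_wrt (<) Q" "Q \<noteq> []" "hd Q = hd P" "last Q = last P"
      "Lv f p P + Lv f p C - (p + 2) * \<eta> * length P \<le> Lv f p Q"
      using core[OF p \<eta>(1) \<eta>(2) sP Pne fP sC setC fC] by blast
    have LQ: "Lv f p Q \<le> Var_p p f" using Lv_le_Var[OF BV Q(1,2)] Q(3,4) hdP lastP by simp
    have "Lv f p C \<le> Lv f p Q - Lv f p P + K * \<eta> * (M + 1)"
      using Q(5) lenP unfolding K_def by simp
    also have "\<dots> < \<epsilon> powr p"
      using LQ LP s(2) Keta \<epsilon>p unfolding \<delta>_def by linarith
    finally have LC: "Lv f p C < \<epsilon> powr p" .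
    have LCe: "Lv f p C = (\<Sum>j\<in>{1..<m}. \<bar>f (x (Suc j)) - f (x j)\<bar> powr p)"
      unfolding Lv_nth shift_sum2 C_def by (simp add: nth_map_upt del: upt_Suc)
    have "(Lv f p C) powr (1 / p) < (\<epsilon> powr p) powr (1 / p)"
      using LC Lv_nonneg p by (intro powr_less_mono2) auto
    also have "\<dots> = \<epsilon>" using p \<epsilon> by (simp add: powr_powr)
    finally show "(\<Sum>j\<in>{1..<m}. \<bar>f (x (Suc j)) - f (x j)\<bar> powr p) powr (1 / p) < \<epsilon>"
      using LCe by simp
  qed
qed

end
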